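(* Let $(M,g,S)$ be as in the context, let $p\in M$, and let $u\in T_pM$ induce an $S$-basis, with $\varphi=\angle(u,Su)$. Then: (i) $u$ is space-like if and only if $\varphi\in(\frac{\pi}{4},\frac{\pi}{2})$; (ii) $u$ is isotropic if and only if $\varphi=\frac{\pi}{2}$; (iii) $u$ is time-like if and only if $\varphi\in(\frac{\pi}{2},\frac{3\pi}{4})$.
   Context: $M$ is a 4-dimensional differentiable manifold with a positive definite (Riemannian) metric $g$ and a tensor field $S$ of type $(1,1)$ whose components in some local coordinate system form the matrix with rows $(0,1,0,0)$, $(0,0,1,0)$, $(0,0,0,1)$, $(-1,0,0,0)$; hence $S^4=-\mathrm{id}$. It is assumed that $g(Su,Sv)=g(u,v)$ for all vector fields $u,v$. The associated metric is $\tilde g(u,v)=g(u,Sv)+g(Su,v)$. A vector $u$ is space-like if $\tilde g(u,u)>0$, time-like if $\tilde g(u,u)<0$, and isotropic if $u\neq 0$ and $\tilde g(u,u)=0$. A vector $u\in T_pM$ induces an $S$-basis if $\{u,Su,S^2u,S^3u\}$ is a basis of $T_pM$. Norms and angles are taken with respect to $g$: $\|u\|=\sqrt{g(u,u)}$, $\cos\angle(u,v)=g(u,v)/(\|u\|\|v\|)$. It is known that if $u$ induces an $S$-basis then $\varphi=\angle(u,Su)$ satisfies $\frac{\pi}{4}<\varphi<\frac{3\pi}{4}$. *)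

theory Defs
  imports "HOL-Analysis.Analysis"
begin

text \<open>We work pointwise: the tangent space T_pM is identified (via the given local
coordinates) with real^4, the structure S_p is given by the stated coordinate matrix,
and g_p is a bilinear, symmetric, positive definite form on it.\<close>

definition S_mat :: "real^4^4" where
  "S_mat = vector [vector [0,1,0,0], vector [0,0,1,0], vector [0,0,0,1], vector [-1,0,0,0]]"

definition S_op :: "real^4 \<Rightarrow> real^4" where
  "S_op u = S_mat *v u"

definition assoc_metric :: "(real^4 \<Rightarrow> real^4 \<Rightarrow> real) \<Rightarrow> real^4 \<Rightarrow> real^4 \<Rightarrow> real" where
  "assoc_metric g u v = g u (S_op v) + g (S_op u) v"

definition space_like :: "(real^4 \<Rightarrow> real^4 \<Rightarrow> real) \<Rightarrow> real^4 \<Rightarrow> bool" where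
  "space_like g u \<longleftrightarrow> assoc_metric g u u > 0"

definition time_like :: "(real^4 \<Rightarrow> real^4 \<Rightarrow> real) \<Rightarrow> real^4 \<Rightarrow> bool" where
  "time_like g u \<longleftrightarrow> assoc_metric g u u < 0"

definition isotropic :: "(real^4 \<Rightarrow> real^4 \<Rightarrow> real) \<Rightarrow> real^4 \<Rightarrow> bool" where
  "isotropic g u \<longleftrightarrow> u \<noteq> 0 \<and> assoc_metric g u u = 0"

definition induces_S_basis :: "real^4 \<Rightarrow> bool" where
  "induces_S_basis u \<longleftrightarrow>
     (let B = {u, S_op u, S_op (S_op u), S_op (S_op (S_op u))}
      in card B = 4 \<and> independent B \<and> span B = UNIV)"

definition g_norm :: "(real^4 \<Rightarrow> real^4 \<Rightarrow> real) \<Rightarrow> real^4 \<Rightarrow> real" where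
  "g_norm g u = sqrt (g u u)"

definition g_angle :: "(real^4 \<Rightarrow> real^4 \<Rightarrow> real) \<Rightarrow> real^4 \<Rightarrow> real^4 \<Rightarrow> real" where
  "g_angle g u v = arccos (g u v / (g_norm g u * g_norm g v))"

end

theory Submission imports Defs begin
lemma Sc: "S_op x $ 1 = x $ 2 \<and> S_op x $ 2 = x $ 3 \<and> S_op x $ 3 = x $ 4 \<and> S_op x $ 4 = - x $ 1"
  by (simp add: S_op_def S_mat_def matrix_vector_mult_def sum_4 vector_def)
lemma S4: "S_op (S_op (S_op (S_op x))) = - x"
  by (simp add: vec_eq_iff forall_4 Sc)
lemma linS: "linear S_op" unfolding S_op_def[abs_def] by (rule matrix_vector_mul_linear)

theorem theorem2p2:
  fixes g :: "real^4 \<Rightarrow> real^4 \<Rightarrow> real" and u :: "real^4" and \<phi> :: real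
  assumes bil: "bilinear g"
    and sym: "\<And>x y. g x y = g y x"
    and posdef: "\<And>x. x \<noteq> 0 \<Longrightarrow> g x x > 0"
    and compat: "\<And>x y. g (S_op x) (S_op y) = g x y"
    and basis: "induces_S_basis u"
    and phi: "\<phi> = g_angle g u (S_op u)"
  shows "(space_like g u \<longleftrightarrow> \<phi> \<in> {pi/4<..<pi/2})
       \<and> (isotropic g u \<longleftrightarrow> \<phi> = pi/2)
       \<and> (time_like g u \<longleftrightarrow> \<phi> \<in> {pi/2<..<3*pi/4})"
proof -
  define S where "S = S_op"
  define v1 where "v1 = S u"
  define v2 where "v2 = S v1"
  define v3 where "v3 = S v2"
  have Sv3: "S v3 = - u" unfolding v3_def v2_def v1_def S_def by (rule S4)
  have B: "card {u, v1, v2, v3} = 4" "independent {u, v1, v2, v3}"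
    using basis unfolding induces_S_basis_def Let_def v3_def v2_def v1_def S_def by auto
  have dist: "u \<noteq> v1" "u \<noteq> v2" "u \<noteq> v3" "v1 \<noteq> v2" "v1 \<noteq> v3" "v2 \<noteq> v3"
    using B(1) by (auto simp: card_insert_if split: if_splits)
  have u0: "u \<noteq> 0"
  proof
    assume "u = 0"
    then have "v1 = 0" unfolding v1_def S_def using linS linear_0 by blast
    with \<open>u = 0\<close> dist show False by simp
  qed
  define p where "p = g u u"
  define a where "a = g u v1"
  have pp: "p > 0" using posdef u0 p_def by simp
  have g11: "g v1 v1 = p" "g v2 v2 = p" "g v3 v3 = p"
    using compat unfolding p_def v3_def v2_def v1_def S_def by auto
  have g12: "g v1 v2 = a" "g v2 v3 = a" using compat unfolding a_def v3_def v2_def v1_def S_def by auto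
  have g13: "g u v3 = - a"
  proof -
    have "g u v3 = g v1 (S v3)" unfolding v1_def S_def using compat[of u v3] by simp
    also have "\<dots> = g v1 (- u)" using Sv3 by simp
    also have "\<dots> = - a" by (simp add: bilinear_rneg[OF bil] a_def sym[of v1 u])
    finally show ?thesis .
  qed
  have g02: "g u v2 = 0"
  proof -
    have "g u v2 = g v1 v3" unfolding v3_def v2_def v1_def S_def using compat by simp
    also have "\<dots> = g v2 (S v3)" unfolding v3_def v2_def S_def using compat by simp
    also have "\<dots> = - g v2 u" using Sv3 by (simp add: bilinear_rneg[OF bil])
    finally show ?thesis using sym[of u v2] by simp
  qed
  have g24: "g v1 v3 = 0" using g02 compat unfolding v3_def v2_def v1_def S_def by simp
  have key: "\<And>e::real. e * e = 1 \<Longrightarrow> 0 < 4 * p - 4 * e * sqrt 2 * a"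
  proof -
    fix e :: real assume e: "e * e = 1"
    define w where "w = sqrt 2 *\<^sub>R u - e *\<^sub>R v1 + e *\<^sub>R v3"
    have "w \<noteq> 0"
    proof
      assume w: "w = 0"
      define c where "c = (\<lambda>v. if v = u then sqrt 2 else if v = v1 then - e else if v = v3 then e else 0)"
      have "(\<Sum>v\<in>{u, v1, v2, v3}. c v *\<^sub>R v) = sqrt 2 *\<^sub>R u + (- e) *\<^sub>R v1 + e *\<^sub>R v3"
        using dist by (simp add: c_def)
      also have "\<dots> = 0" using w unfolding w_def by (simp add: algebra_simps)
      finally have "c u = 0" using B(2) unfolding independent_explicit by blast
      then show False by (simp add: c_def)
    qed
    then have "g w w > 0" using posdef by blast
    moreover have "g w w = 4 * p - 4 * e * sqrt 2 * a"
    proof -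
      have "g w w = 2 * g u u + e*e * g v1 v1 + e * e * g v3 v3
          - 2 * e * sqrt 2 * g u v1 + 2 * e * sqrt 2 * g u v3 - 2 * e * e * g v1 v3"
        unfolding w_def
        by (simp add: bilinear_ladd[OF bil] bilinear_radd[OF bil] bilinear_lsub[OF bil]
            bilinear_rsub[OF bil] bilinear_lmul[OF bil] bilinear_rmul[OF bil] sym[of v1 u] sym[of v3 u] sym[of v3 v1]
            algebra_simps)
      then show ?thesis using g11 g13 g24 e by (simp add: p_def a_def algebra_simps)
    qed
    ultimately show "0 < 4 * p - 4 * e * sqrt 2 * a" by simp
  qed
  define x where "x = a / p"
  have xb1: "x * sqrt 2 < 1" using key[of 1] pp by (simp add: x_def field_simps)
  have xb2: "- 1 < x * sqrt 2" using key[of "-1"] pp by (simp add: x_def field_simps)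
  have s2: "sqrt 2 * sqrt 2 = 2" by simp
  have s2p: "sqrt 2 > 1" by simp
  have m1: "x * 2 < sqrt 2"
  proof -
    have "(x * sqrt 2) * sqrt 2 < 1 * sqrt 2" using xb1 by (intro mult_strict_right_mono) auto
    then show ?thesis using s2 by (simp add: mult.assoc)
  qed
  have m2: "- sqrt 2 < x * 2"
  proof -
    have "(-1) * sqrt 2 < (x * sqrt 2) * sqrt 2" using xb2 by (intro mult_strict_right_mono) auto
    then show ?thesis using s2 by (simp add: mult.assoc)
  qed
  have xr: "x < sqrt 2 / 2" "- (sqrt 2 / 2) < x" using m1 m2 by linarith+
  have s22: "sqrt 2 < 2"
  proof -
    have "sqrt 2 * 1 < sqrt 2 * sqrt 2" using s2p by (intro mult_strict_left_mono) auto
    then show ?thesis using s2 by simp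
  qed
  have xin: "-1 \<le> x" "x \<le> 1" using xr s22 by linarith+
  have phx: "\<phi> = arccos x"
  proof -
    have "g_norm g (S_op u) = g_norm g u" unfolding g_norm_def using compat by simp
    moreover have "g_norm g u * g_norm g u = p" unfolding g_norm_def p_def using pp p_def
      by simp
    ultimately show ?thesis unfolding phi g_angle_def x_def a_def v1_def S_def by simp
  qed
  have c34: "cos (3 * pi / 4) = - (sqrt 2 / 2)"
  proof -
    have "cos (3 * pi / 4) = cos (pi - pi/4)" by (simp add: field_simps)
    also have "\<dots> = - cos (pi/4)" by (rule cos_pi_minus)
    finally show ?thesis by (simp add: cos_45)
  qed
  have lo: "pi/4 < \<phi>"
  proof -
    have "arccos (cos (pi/4)) < arccos x"
      using xr xin s22 by (intro arccos_less_arccos) (auto simp: cos_45)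
    then show ?thesis using phx by (simp add: arccos_cos)
  qed
  have hi: "\<phi> < 3*pi/4"
  proof -
    have "arccos x < arccos (cos (3*pi/4))"
      using xr xin c34 s22 by (intro arccos_less_arccos) auto
    then show ?thesis using phx by (subst (asm) arccos_cos) auto
  qed
  have am: "assoc_metric g u u = 2 * a"
    unfolding assoc_metric_def a_def v1_def S_def using sym[of "S_op u" u] by simp
  have sgn: "(0 < a) = (0 < x)" "(a = 0) = (x = 0)" "(a < 0) = (x < 0)"
    using pp by (auto simp: x_def field_simps zero_less_divide_iff divide_less_0_iff)
  have c1: "(0 < x) = (\<phi> < pi/2)"
  proof
    assume "0 < x" then have "arccos x < arccos 0" using xin by (intro arccos_less_arccos) auto
    then show "\<phi> < pi/2" using phx by simp
  next
    assume "\<phi> < pi/2"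
    then have "arccos x < arccos 0" using phx by simp
    show "0 < x"
    proof (rule ccontr)
      assume "\<not> 0 < x"
      then have "arccos 0 \<le> arccos x" using xin by (intro arccos_le_arccos) auto
      with \<open>arccos x < arccos 0\<close> show False by simp
    qed
  qed
  have c2: "(x < 0) = (pi/2 < \<phi>)"
  proof
    assume "x < 0" then have "arccos 0 < arccos x" using xin by (intro arccos_less_arccos) auto
    then show "pi/2 < \<phi>" using phx by simp
  next
    assume "pi/2 < \<phi>"
    then have "arccos 0 < arccos x" using phx by simp
    show "x < 0"
    proof (rule ccontr)
      assume "\<not> x < 0"
      then have "arccos x \<le> arccos 0" using xin by (intro arccos_le_arccos) auto
      with \<open>arccos 0 < arccos x\<close> show False by simp
    qed
  qed
  show ?thesis
    unfolding space_like_def isotropic_def time_like_def am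
    using sgn c1 c2 lo hi u0 by auto
qed
end
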